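(* Let $n\ge2$. The Lie algebra $(\mathfrak{sl}_{n+1}(\mathbb C),\mu_\infty)$, where \[\mu_\infty:=[\cdot,\cdot]\big|_{\mathfrak{sl}_n(\mathbb C)\wedge\mathfrak{sl}_n(\mathbb C)}+[\cdot,\cdot]\big|_{\mathfrak{sl}_n(\mathbb C)\wedge\mathfrak s}+\sqrt{\frac{n^2-2}{n(n+1)}}\,\mathrm{Pr}_{\mathbb CI}\circ[\cdot,\cdot]\big|_{\mathfrak s\wedge\mathfrak s},\] is a semi-direct product $\mathfrak{sl}_n(\mathbb C)\ltimes\mathfrak h_{2n+1}$, where $\mathfrak h_{2n+1}$ is the complex Heisenberg Lie algebra (realized as $(\mathbb CI\oplus\mathfrak s,\mu_\infty)$).
   Context: $[\cdot,\cdot]$ is the commutator on $\mathfrak{sl}_{n+1}(\mathbb C)=\mathfrak{sl}_n(\mathbb C)\oplus\mathbb CI\oplus\mathfrak s$, with $\mathfrak{sl}_n(\mathbb C)$ the upper-left $n\times n$ block, $I=\sqrt{\tfrac1{n(n+1)}}\operatorname{diag}(1,\dots,1,-n)$, $\mathfrak s=\operatorname{span}_{\mathbb C}\{e_{i(n+1)},e_{(n+1)i}\}_{i=1}^n$, and $\mathrm{Pr}_{\mathbb CI}$ the orthogonal projection onto $\mathbb CI$ with respect to $\langle X,Y\rangle=\operatorname{tr}(XY^* )$. The complex Heisenberg Lie algebra $\mathfrak h_{2n+1}$ has a basis $X_1,\dots,X_n,Y_1,\dots,Y_n,Z$ whose only nonzero brackets are $[X_i,Y_j]=\delta_{ij}Z$.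 *)

theory Defs
  imports Complex_Main "HOL-Library.Function_Algebras"
begin

text \<open>Square matrices of size N are represented as functions nat => nat => complex
  vanishing outside the index block {0..<N} x {0..<N} (0-based indices; the
  (n+1)-st row/column of the paper is index n).\<close>

type_synonym cmat = "nat \<Rightarrow> nat \<Rightarrow> complex"

definition msupp :: "nat \<Rightarrow> cmat \<Rightarrow> bool" where
  "msupp N A \<longleftrightarrow> (\<forall>i j. (N \<le> i \<or> N \<le> j) \<longrightarrow> A i j = 0)"

definition mtrace :: "nat \<Rightarrow> cmat \<Rightarrow> complex" where
  "mtrace N A = (\<Sum>i<N. A i i)"

definition msc :: "complex \<Rightarrow> cmat \<Rightarrow> cmat" where
  "msc c A = (\<lambda>i j. c * A i j)"

definition mmul :: "nat \<Rightarrow> cmat \<Rightarrow> cmat \<Rightarrow> cmat" where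
  "mmul N A B = (\<lambda>i j. if i < N \<and> j < N then (\<Sum>k<N. A i k * B k j) else 0)"

definition comm :: "nat \<Rightarrow> cmat \<Rightarrow> cmat \<Rightarrow> cmat" where
  "comm N A B = (\<lambda>i j. mmul N A B i j - mmul N B A i j)"

definition sl :: "nat \<Rightarrow> cmat set" where
  "sl N = {A. msupp N A \<and> mtrace N A = 0}"

definition hs :: "nat \<Rightarrow> cmat \<Rightarrow> cmat \<Rightarrow> complex" where
  "hs N A B = (\<Sum>i<N. \<Sum>j<N. A i j * cnj (B i j))"

definition Imat :: "nat \<Rightarrow> cmat" where
  "Imat n = (\<lambda>i j. if i = j \<and> i < n then complex_of_real (sqrt (1 / (real n * (real n + 1))))
                   else if i = j \<and> i = n then - of_nat n * complex_of_real (sqrt (1 / (real n * (real n + 1))))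
                   else 0)"

definition s_space :: "nat \<Rightarrow> cmat set" where
  "s_space n = {A. \<forall>i j. A i j \<noteq> 0 \<longrightarrow> ((i < n \<and> j = n) \<or> (i = n \<and> j < n))}"

definition PrCI :: "nat \<Rightarrow> cmat \<Rightarrow> cmat" where
  "PrCI n X = msc (hs (Suc n) X (Imat n) / hs (Suc n) (Imat n) (Imat n)) (Imat n)"

text \<open>Components of X in sl_{n+1} = sl_n + CI + s (the decomposition is orthogonal,
  so the CI-component is PrCI X; the s-component is the last row/column off the
  diagonal; the sl_n-component is the rest).\<close>
definition compS :: "nat \<Rightarrow> cmat \<Rightarrow> cmat" where
  "compS n X = (\<lambda>i j. if (i < n \<and> j = n) \<or> (i = n \<and> j < n) then X i j else 0)"

definition compSl :: "nat \<Rightarrow> cmat \<Rightarrow> cmat" where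
  "compSl n X = (\<lambda>i j. X i j - PrCI n X i j - compS n X i j)"

definition mu_inf :: "nat \<Rightarrow> cmat \<Rightarrow> cmat \<Rightarrow> cmat" where
  "mu_inf n X Y =
     comm (Suc n) (compSl n X) (compSl n Y)
     + comm (Suc n) (compSl n X) (compS n Y)
     + comm (Suc n) (compS n X) (compSl n Y)
     + msc (complex_of_real (sqrt ((real n ^ 2 - 2) / (real n * (real n + 1)))))
           (PrCI n (comm (Suc n) (compS n X) (compS n Y)))"

definition heis_part :: "nat \<Rightarrow> cmat set" where
  "heis_part n = {X. \<exists>c S. S \<in> s_space n \<and> X = msc c (Imat n) + S}"

definition subspace_c :: "cmat set \<Rightarrow> bool" where
  "subspace_c V \<longleftrightarrow> 0 \<in> V \<and> (\<forall>x\<in>V. \<forall>y\<in>V. x + y \<in> V) \<and> (\<forall>c. \<forall>x\<in>V. msc c x \<in> V)"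

definition lie_algebra :: "cmat set \<Rightarrow> (cmat \<Rightarrow> cmat \<Rightarrow> cmat) \<Rightarrow> bool" where
  "lie_algebra V b \<longleftrightarrow> subspace_c V
    \<and> (\<forall>x\<in>V. \<forall>y\<in>V. b x y \<in> V)
    \<and> (\<forall>x\<in>V. \<forall>y\<in>V. \<forall>z\<in>V. \<forall>c. b (x + msc c y) z = b x z + msc c (b y z))
    \<and> (\<forall>x\<in>V. \<forall>y\<in>V. \<forall>z\<in>V. \<forall>c. b z (x + msc c y) = b z x + msc c (b z y))
    \<and> (\<forall>x\<in>V. b x x = 0)
    \<and> (\<forall>x\<in>V. \<forall>y\<in>V. \<forall>z\<in>V. b x (b y z) + b y (b z x) + b z (b x y) = 0)"

definition subalgebra :: "cmat set \<Rightarrow> (cmat \<Rightarrow> cmat \<Rightarrow> cmat) \<Rightarrow> cmat set \<Rightarrow> bool" where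
  "subalgebra V b S \<longleftrightarrow> S \<subseteq> V \<and> subspace_c S \<and> (\<forall>x\<in>S. \<forall>y\<in>S. b x y \<in> S)"

definition lie_ideal :: "cmat set \<Rightarrow> (cmat \<Rightarrow> cmat \<Rightarrow> cmat) \<Rightarrow> cmat set \<Rightarrow> bool" where
  "lie_ideal V b H \<longleftrightarrow> H \<subseteq> V \<and> subspace_c H \<and> (\<forall>x\<in>V. \<forall>y\<in>H. b x y \<in> H)"

definition semidirect :: "cmat set \<Rightarrow> (cmat \<Rightarrow> cmat \<Rightarrow> cmat) \<Rightarrow> cmat set \<Rightarrow> cmat set \<Rightarrow> bool" where
  "semidirect V b S H \<longleftrightarrow> subalgebra V b S \<and> lie_ideal V b H \<and> S \<inter> H = {0}
     \<and> (\<forall>x\<in>V. \<exists>s\<in>S. \<exists>h\<in>H. x = s + h)"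

text \<open>(H, b) is isomorphic to the complex Heisenberg algebra h_{2m+1}: H has a basis
  X_1..X_m, Y_1..Y_m, Z whose only nonzero brackets are [X_i,Y_j] = delta_ij Z
  (brackets of basis vectors are determined up to antisymmetry).\<close>
definition heisenberg :: "nat \<Rightarrow> cmat set \<Rightarrow> (cmat \<Rightarrow> cmat \<Rightarrow> cmat) \<Rightarrow> bool" where
  "heisenberg m H b \<longleftrightarrow> (\<exists>X Y Z.
      (\<forall>i<m. X i \<in> H \<and> Y i \<in> H) \<and> Z \<in> H
    \<and> (\<forall>a a' c. (\<Sum>i<m. msc (a i) (X i)) + (\<Sum>i<m. msc (a' i) (Y i)) + msc c Z = 0
          \<longrightarrow> (\<forall>i<m. a i = 0 \<and> a' i = 0) \<and> c = 0)
    \<and> (\<forall>h\<in>H. \<exists>a a' c. h = (\<Sum>i<m. msc (a i) (X i)) + (\<Sum>i<m. msc (a' i) (Y i)) + msc c Z)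
    \<and> (\<forall>i<m. \<forall>j<m. b (X i) (Y j) = (if i = j then Z else 0)
                  \<and> b (X i) (X j) = 0 \<and> b (Y i) (Y j) = 0)
    \<and> (\<forall>i<m. b (X i) Z = 0 \<and> b (Y i) Z = 0))"

end

theory Submission
  imports Defs
begin

lemma sum_fun_app: "(\<Sum>i\<in>A. (f i :: cmat)) p q = (\<Sum>i\<in>A. f i p q)"
  by (induct A rule: infinite_finite_induct) auto

definition alpha :: "nat \<Rightarrow> complex" where
  "alpha n = complex_of_real (sqrt (1 / (real n * (real n + 1))))"

lemma alpha_sq: "1 \<le> n \<Longrightarrow> alpha n * alpha n * (of_nat n * (of_nat n + 1)) = 1"
proof -
  assume "1 \<le> n"
  define r where "r = 1 / (real n * (real n + 1))"
  have r0: "r \<ge> 0" unfolding r_def by simp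
  have "sqrt r * sqrt r = r" using r0 by simp
  moreover have "r * (real n * (real n + 1)) = 1" unfolding r_def using \<open>1 \<le> n\<close> by simp
  ultimately have 1: "sqrt r * sqrt r * (real n * (real n + 1)) = 1" by simp
  have e: "alpha n = complex_of_real (sqrt r)" by (simp add: alpha_def r_def)
  have "alpha n * alpha n * (of_nat n * (of_nat n + 1)) = complex_of_real (sqrt r * sqrt r * (real n * (real n + 1)))"
    unfolding e by (simp only: of_real_mult of_real_of_nat_eq of_real_add of_real_1)
  also have "\<dots> = 1" by (simp only: 1 of_real_1)
  finally show ?thesis .
qed

lemma alpha_nz: "1 \<le> n \<Longrightarrow> alpha n \<noteq> 0"
  using alpha_sq by force

lemma cnj_alpha[simp]: "cnj (alpha n) = alpha n"
  unfolding alpha_def by simp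

lemma Imat_alt: "Imat n = (\<lambda>i j. if i = j \<and> i < n then alpha n
     else if i = j \<and> i = n then - of_nat n * alpha n else 0)"
  unfolding Imat_def alpha_def by simp

lemma hs_I: "hs (Suc n) M (Imat n) = alpha n * (\<Sum>i<n. M i i) - of_nat n * alpha n * M n n"
proof -
  have inner: "(\<Sum>j<Suc n. M i j * cnj (Imat n i j)) = M i i * cnj (Imat n i i)" if "i < Suc n" for i
  proof -
    have "(\<Sum>j<Suc n. M i j * cnj (Imat n i j)) = (\<Sum>j<Suc n. if i = j then M i i * cnj (Imat n i i) else 0)"
      by (rule sum.cong) (auto simp: Imat_alt)
    also have "\<dots> = M i i * cnj (Imat n i i)" using that by simp
    finally show ?thesis .
  qed
  have "hs (Suc n) M (Imat n) = (\<Sum>i<Suc n. M i i * cnj (Imat n i i))"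
    unfolding hs_def by (rule sum.cong[OF refl], rule inner, simp)
  also have "\<dots> = (\<Sum>i<n. M i i * alpha n) + M n n * (- of_nat n * alpha n)"
    by (simp add: Imat_alt)
  also have "\<dots> = alpha n * (\<Sum>i<n. M i i) - of_nat n * alpha n * M n n"
    by (simp add: sum_distrib_left algebra_simps)
  finally show ?thesis .
qed

lemma hsII: "1 \<le> n \<Longrightarrow> hs (Suc n) (Imat n) (Imat n) = 1"
proof -
  assume h: "1 \<le> n"
  have "hs (Suc n) (Imat n) (Imat n) = alpha n * (of_nat n * alpha n) + of_nat n * alpha n * (of_nat n * alpha n)"
    by (simp add: hs_I) (simp add: Imat_alt)
  also have "\<dots> = alpha n * alpha n * (of_nat n * (of_nat n + 1))" by (simp add: algebra_simps)
  finally show ?thesis using alpha_sq[OF h] by simp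
qed

lemma PrCI_eq: "1 \<le> n \<Longrightarrow> PrCI n X = msc (hs (Suc n) X (Imat n)) (Imat n)"
  unfolding PrCI_def using hsII by simp

lemma msc_apply[simp]: "msc c A i j = c * A i j" by (simp add: msc_def)
lemma msc_add: "msc c (A + B) = msc c A + msc c B" by (simp add: fun_eq_iff algebra_simps)
lemma msc_zero[simp]: "msc c 0 = 0" by (simp add: fun_eq_iff)
lemma msc_0[simp]: "msc 0 A = 0" by (simp add: fun_eq_iff)
lemma msc_msc: "msc a (msc b A) = msc (a * b) A" by (simp add: fun_eq_iff)
lemma msc_1[simp]: "msc 1 A = A" by (simp add: fun_eq_iff)
lemma msc_uminus: "msc c (- A) = - msc c A" by (simp add: fun_eq_iff)

lemma hs_add: "hs N (X + Y) B = hs N X B + hs N Y B"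
  by (simp add: hs_def sum.distrib algebra_simps)
lemma hs_msc: "hs N (msc c X) B = c * hs N X B"
  by (simp add: hs_def sum_distrib_left algebra_simps)
lemma hs_uminus: "hs N (- X) B = - hs N X B"
  by (simp add: hs_def sum_negf)
lemma hs_zero: "hs N 0 B = 0"
  by (simp add: hs_def)

lemma PrCI_add: "PrCI n (X + Y) = PrCI n X + PrCI n Y"
  by (simp add: PrCI_def hs_add fun_eq_iff add_divide_distrib algebra_simps)
lemma PrCI_msc: "PrCI n (msc c X) = msc c (PrCI n X)"
  by (simp add: PrCI_def hs_msc fun_eq_iff)
lemma PrCI_uminus: "PrCI n (- X) = - PrCI n X"
  by (simp add: PrCI_def hs_uminus fun_eq_iff)
lemma PrCI_zero[simp]: "PrCI n 0 = 0"
  by (simp add: PrCI_def hs_zero fun_eq_iff)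

lemma compS_add: "compS n (X + Y) = compS n X + compS n Y"
  by (simp add: compS_def fun_eq_iff)
lemma compS_msc: "compS n (msc c X) = msc c (compS n X)"
  by (simp add: compS_def fun_eq_iff)
lemma compS_uminus: "compS n (- X) = - compS n X"
  by (simp add: compS_def fun_eq_iff)
lemma compS_zero[simp]: "compS n 0 = 0"
  by (simp add: compS_def fun_eq_iff)

lemma compSl_add: "compSl n (X + Y) = compSl n X + compSl n Y"
  by (simp add: compSl_def PrCI_add compS_add fun_eq_iff)
lemma compSl_msc: "compSl n (msc c X) = msc c (compSl n X)"
  by (simp add: compSl_def PrCI_msc compS_msc fun_eq_iff algebra_simps)
lemma compSl_uminus: "compSl n (- X) = - compSl n X"
  by (simp add: compSl_def PrCI_uminus compS_uminus fun_eq_iff)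
lemma compSl_zero[simp]: "compSl n 0 = 0"
  by (simp add: compSl_def fun_eq_iff)

lemma comm_eq: "comm N A B = mmul N A B - mmul N B A"
  by (simp add: comm_def fun_eq_iff)

lemma mmul_add_left: "mmul N (A + B) C = mmul N A C + mmul N B C"
  by (simp add: mmul_def fun_eq_iff sum.distrib algebra_simps)
lemma mmul_add_right: "mmul N C (A + B) = mmul N C A + mmul N C B"
  by (simp add: mmul_def fun_eq_iff sum.distrib algebra_simps)
lemma mmul_diff_left: "mmul N (A - B) C = mmul N A C - mmul N B C"
  by (simp add: mmul_def fun_eq_iff sum_subtractf algebra_simps)
lemma mmul_diff_right: "mmul N C (A - B) = mmul N C A - mmul N C B"
  by (simp add: mmul_def fun_eq_iff sum_subtractf algebra_simps)
lemma mmul_msc_left: "mmul N (msc c A) C = msc c (mmul N A C)"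
  by (simp add: mmul_def fun_eq_iff sum_distrib_left algebra_simps)
lemma mmul_msc_right: "mmul N C (msc c A) = msc c (mmul N C A)"
  by (simp add: mmul_def fun_eq_iff sum_distrib_left algebra_simps)
lemma mmul_zero_left[simp]: "mmul N 0 C = 0"
  by (simp add: mmul_def fun_eq_iff)
lemma mmul_zero_right[simp]: "mmul N C 0 = 0"
  by (simp add: mmul_def fun_eq_iff)

lemma mmul_assoc: "mmul N A (mmul N B C) = mmul N (mmul N A B) C"
proof (rule ext, rule ext)
  fix i j
  show "mmul N A (mmul N B C) i j = mmul N (mmul N A B) C i j"
  proof (cases "i < N \<and> j < N")
    case True
    have "(\<Sum>k<N. A i k * (\<Sum>l<N. B k l * C l j)) = (\<Sum>k<N. \<Sum>l<N. A i k * B k l * C l j)"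
      by (simp add: sum_distrib_left mult.assoc)
    also have "\<dots> = (\<Sum>l<N. \<Sum>k<N. A i k * B k l * C l j)" by (rule sum.swap)
    also have "\<dots> = (\<Sum>l<N. (\<Sum>k<N. A i k * B k l) * C l j)"
      by (simp add: sum_distrib_right)
    finally show ?thesis using True by (simp add: mmul_def)
  next
    case False
    then show ?thesis unfolding mmul_def by auto
  qed
qed

lemma comm_add_left: "comm N (A + B) C = comm N A C + comm N B C"
  by (simp add: comm_eq mmul_add_left mmul_add_right)
lemma comm_add_right: "comm N C (A + B) = comm N C A + comm N C B"
  by (simp add: comm_eq mmul_add_left mmul_add_right)
lemma comm_msc_left: "comm N (msc c A) C = msc c (comm N A C)"
  by (simp add: comm_eq mmul_msc_left mmul_msc_right fun_eq_iff algebra_simps)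
lemma comm_msc_right: "comm N C (msc c A) = msc c (comm N C A)"
  by (simp add: comm_eq mmul_msc_left mmul_msc_right fun_eq_iff algebra_simps)
lemma comm_zero_left[simp]: "comm N 0 C = 0"
  by (simp add: comm_eq)
lemma comm_zero_right[simp]: "comm N C 0 = 0"
  by (simp add: comm_eq)
lemma comm_anti: "comm N A B = - comm N B A"
  by (simp add: comm_eq)
lemma comm_self[simp]: "comm N A A = 0"
  by (simp add: comm_eq)
lemma comm_jacobi: "comm N A (comm N B C) + comm N B (comm N C A) + comm N C (comm N A B) = 0"
  by (simp add: comm_eq mmul_diff_left mmul_diff_right mmul_assoc)

lemma trace_comm: "mtrace N (comm N A B) = 0"
proof -
  have "mtrace N (comm N A B) = (\<Sum>i<N. \<Sum>k<N. A i k * B k i) - (\<Sum>i<N. \<Sum>k<N. B i k * A k i)"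
    by (simp add: mtrace_def comm_def mmul_def sum_subtractf)
  also have "(\<Sum>i<N. \<Sum>k<N. B i k * A k i) = (\<Sum>k<N. \<Sum>i<N. B i k * A k i)" by (rule sum.swap)
  finally show ?thesis by (simp add: mult.commute)
qed

lemma mtrace_Suc: "mtrace (Suc n) X = mtrace n X + X n n"
  by (simp add: mtrace_def)

lemma sl_iff: "A \<in> sl N \<longleftrightarrow> (\<forall>i j. (N \<le> i \<or> N \<le> j) \<longrightarrow> A i j = 0) \<and> mtrace N A = 0"
  by (simp add: sl_def msupp_def)

lemma slD: "A \<in> sl N \<Longrightarrow> N \<le> i \<or> N \<le> j \<Longrightarrow> A i j = 0"
  by (auto simp: sl_iff)

lemma s_spaceD: "S \<in> s_space n \<Longrightarrow> \<not> ((i < n \<and> j = n) \<or> (i = n \<and> j < n)) \<Longrightarrow> S i j = 0"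
  unfolding s_space_def by blast

lemma PrCI_sl: "B \<in> sl n \<Longrightarrow> PrCI n B = 0"
proof -
  assume B: "B \<in> sl n"
  have "hs (Suc n) B (Imat n) = 0"
    using B by (simp add: hs_I slD) (simp add: sl_def mtrace_def)
  thus ?thesis by (simp add: PrCI_def fun_eq_iff)
qed

lemma compS_sl: "B \<in> sl n \<Longrightarrow> compS n B = 0"
  by (auto simp: compS_def fun_eq_iff slD)

lemma compSl_sl: "B \<in> sl n \<Longrightarrow> compSl n B = B"
  by (simp add: compSl_def PrCI_sl compS_sl fun_eq_iff)

lemma PrCI_s: "B \<in> s_space n \<Longrightarrow> PrCI n B = 0"
proof -
  assume B: "B \<in> s_space n"
  have "hs (Suc n) B (Imat n) = 0"
    using B by (simp add: hs_I s_spaceD)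
  thus ?thesis by (simp add: PrCI_def fun_eq_iff)
qed

lemma compS_s: "B \<in> s_space n \<Longrightarrow> compS n B = B"
  by (auto simp: compS_def fun_eq_iff s_spaceD)

lemma compSl_s: "B \<in> s_space n \<Longrightarrow> compSl n B = 0"
  by (simp add: compSl_def PrCI_s compS_s fun_eq_iff)

lemma compS_I: "compS n (msc c (Imat n)) = 0"
  by (simp add: compS_def fun_eq_iff Imat_alt)

lemma PrCI_I: "1 \<le> n \<Longrightarrow> PrCI n (msc c (Imat n)) = msc c (Imat n)"
  by (simp add: PrCI_msc PrCI_eq hsII)

lemma compSl_I: "1 \<le> n \<Longrightarrow> compSl n (msc c (Imat n)) = 0"
  by (simp add: compSl_def PrCI_I compS_I fun_eq_iff)

lemma PrCI_form: "PrCI n M = msc (hs (Suc n) M (Imat n) / hs (Suc n) (Imat n) (Imat n)) (Imat n)"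
  by (simp add: PrCI_def)

lemma compSl_PrCI: "1 \<le> n \<Longrightarrow> compSl n (PrCI n M) = 0"
  unfolding PrCI_form by (rule compSl_I)

lemma compS_PrCI: "compS n (PrCI n M) = 0"
  unfolding PrCI_form by (rule compS_I)

lemma comm_sl_sl: "A \<in> sl n \<Longrightarrow> A' \<in> sl n \<Longrightarrow> comm (Suc n) A A' \<in> sl n"
proof -
  assume A: "A \<in> sl n" and A': "A' \<in> sl n"
  have z: "comm (Suc n) A A' i j = 0" if "n \<le> i \<or> n \<le> j" for i j
    using that by (auto simp: comm_def mmul_def slD[OF A] slD[OF A'])
  have "mtrace n (comm (Suc n) A A') = mtrace (Suc n) (comm (Suc n) A A') - comm (Suc n) A A' n n"
    by (simp add: mtrace_Suc)
  also have "\<dots> = 0" by (simp add: trace_comm z)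
  finally show ?thesis using z by (simp add: sl_iff)
qed

lemma comm_sl_s: "A \<in> sl n \<Longrightarrow> S \<in> s_space n \<Longrightarrow> comm (Suc n) A S \<in> s_space n"
proof -
  assume A: "A \<in> sl n" and S: "S \<in> s_space n"
  have "comm (Suc n) A S i j = 0" if h: "\<not> ((i < n \<and> j = n) \<or> (i = n \<and> j < n))" for i j
  proof -
    have t1: "A i k * S k j = 0" for k
    proof (cases "(k < n \<and> j = n) \<or> (k = n \<and> j < n)")
      case True
      then have "n \<le> i \<or> k = n" using h by auto
      then show ?thesis using slD[OF A] by auto
    next
      case False
      then show ?thesis using s_spaceD[OF S False] by simp
    qed
    have t2: "S i k * A k j = 0" for k
    proof (cases "(i < n \<and> k = n) \<or> (i = n \<and> k < n)")
      case True
      then have "k = n \<or> n \<le> j" using h by auto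
      then show ?thesis using slD[OF A] by auto
    next
      case False
      then show ?thesis using s_spaceD[OF S False] by simp
    qed
    show ?thesis by (simp add: comm_def mmul_def t1 t2)
  qed
  thus ?thesis unfolding s_space_def by blast
qed

lemma s_uminus: "S \<in> s_space n \<Longrightarrow> - S \<in> s_space n"
  unfolding s_space_def by auto

lemma comm_s_sl: "A \<in> sl n \<Longrightarrow> S \<in> s_space n \<Longrightarrow> comm (Suc n) S A \<in> s_space n"
  using comm_anti[of "Suc n" S A] comm_sl_s s_uminus by metis

lemma PrCI_comm_sl: "A \<in> sl n \<Longrightarrow> PrCI n (comm (Suc n) A M) = 0"
proof -
  assume A: "A \<in> sl n"
  let ?C = "comm (Suc n) A M"
  have cnn: "?C n n = 0" by (simp add: comm_def mmul_def slD[OF A])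
  have "(\<Sum>i<n. ?C i i) = mtrace (Suc n) ?C - ?C n n" by (simp add: mtrace_Suc mtrace_def)
  also have "\<dots> = 0" by (simp add: trace_comm cnn)
  finally have "hs (Suc n) ?C (Imat n) = 0" by (simp add: hs_I cnn)
  thus ?thesis by (simp add: PrCI_def fun_eq_iff)
qed

lemma compS_in_s: "compS n X \<in> s_space n"
  unfolding s_space_def compS_def by auto

lemma compSl_in_sl: "1 \<le> n \<Longrightarrow> X \<in> sl (Suc n) \<Longrightarrow> compSl n X \<in> sl n"
proof -
  assume n: "1 \<le> n" and X: "X \<in> sl (Suc n)"
  define p where "p = hs (Suc n) X (Imat n)"
  define a where "a = alpha n"
  have aa: "a * a * (of_nat n * (of_nat n + 1)) = 1" using alpha_sq[OF n] by (simp add: a_def)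
  have tr: "(\<Sum>i<n. X i i) = - X n n"
    using X by (simp add: sl_def mtrace_Suc) (simp add: mtrace_def add_eq_0_iff)
  have p: "p = - a * (of_nat n + 1) * X n n"
    unfolding p_def hs_I tr a_def by (simp add: algebra_simps)
  have P: "compSl n X i j = X i j - p * Imat n i j - compS n X i j" for i j
    by (simp add: compSl_def PrCI_eq[OF n] p_def)
  have z: "compSl n X i j = 0" if hij: "n \<le> i \<or> n \<le> j" for i j
  proof -
    have "Suc n \<le> i \<or> Suc n \<le> j \<or> (i = n \<and> j < n) \<or> (i < n \<and> j = n) \<or> (i = n \<and> j = n)"
      using hij by arith
    then consider "Suc n \<le> i \<or> Suc n \<le> j" | "i = n \<and> j < n" | "i < n \<and> j = n" | "i = n \<and> j = n"
      by blast
    then show ?thesis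
    proof cases
      case 1 then show ?thesis using slD[OF X] by (auto simp: P Imat_alt compS_def)
    next
      case 2 then show ?thesis by (auto simp: P Imat_alt compS_def)
    next
      case 3 then show ?thesis by (auto simp: P Imat_alt compS_def)
    next
      case 4
      then have "compSl n X i j = X n n + of_nat n * a * p" by (simp add: P Imat_alt compS_def a_def)
      also have "\<dots> = X n n * (1 - a * a * (of_nat n * (of_nat n + 1)))" by (simp add: p algebra_simps)
      finally show ?thesis using aa by simp
    qed
  qed
  have "mtrace n (compSl n X) = (\<Sum>i<n. X i i - p * a)"
    unfolding mtrace_def by (rule sum.cong) (auto simp: P Imat_alt compS_def a_def)
  also have "\<dots> = - X n n - of_nat n * p * a" by (simp add: sum_subtractf tr)
  also have "\<dots> = X n n * (a * a * (of_nat n * (of_nat n + 1)) - 1)" by (simp add: p algebra_simps)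
  also have "\<dots> = 0" using aa by simp
  finally show ?thesis using z by (simp add: sl_iff)
qed

definition Tj :: "nat \<Rightarrow> complex \<Rightarrow> cmat \<Rightarrow> cmat \<Rightarrow> cmat \<Rightarrow> cmat \<Rightarrow> cmat \<Rightarrow> cmat \<Rightarrow> cmat" where
  "Tj n k a1 s1 a2 s2 a3 s3 = comm (Suc n) a1 (comm (Suc n) a2 a3)
     + comm (Suc n) a1 (comm (Suc n) a2 s3 + comm (Suc n) s2 a3)
     + comm (Suc n) s1 (comm (Suc n) a2 a3)
     + msc k (PrCI n (comm (Suc n) s1 (comm (Suc n) a2 s3 + comm (Suc n) s2 a3)))"

lemma P2_pair: "A \<in> sl n \<Longrightarrow>
   PrCI n (comm (Suc n) S (comm (Suc n) A S')) + PrCI n (comm (Suc n) S' (comm (Suc n) S A)) = 0"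
proof -
  assume A: "A \<in> sl n"
  have "PrCI n (comm (Suc n) S (comm (Suc n) A S') + comm (Suc n) A (comm (Suc n) S' S) + comm (Suc n) S' (comm (Suc n) S A)) = 0"
    using comm_jacobi[of "Suc n" S A S'] by simp
  thus ?thesis by (simp add: PrCI_add PrCI_comm_sl[OF A])
qed

lemma jac_core:
  assumes A1: "A1 \<in> sl n" and A2: "A2 \<in> sl n" and A3: "A3 \<in> sl n"
  shows "Tj n k A1 S1 A2 S2 A3 S3 + Tj n k A2 S2 A3 S3 A1 S1 + Tj n k A3 S3 A1 S1 A2 S2 = 0"
proof -
  let ?c = "comm (Suc n)"
  have e: "Tj n k A1 S1 A2 S2 A3 S3 + Tj n k A2 S2 A3 S3 A1 S1 + Tj n k A3 S3 A1 S1 A2 S2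
    = (?c A1 (?c A2 A3) + ?c A2 (?c A3 A1) + ?c A3 (?c A1 A2))
    + (?c A1 (?c A2 S3) + ?c A2 (?c S3 A1) + ?c S3 (?c A1 A2))
    + (?c A2 (?c A3 S1) + ?c A3 (?c S1 A2) + ?c S1 (?c A2 A3))
    + (?c A3 (?c A1 S2) + ?c A1 (?c S2 A3) + ?c S2 (?c A3 A1))
    + msc k ((PrCI n (?c S1 (?c A2 S3)) + PrCI n (?c S3 (?c S1 A2)))
           + (PrCI n (?c S2 (?c A3 S1)) + PrCI n (?c S1 (?c S2 A3)))
           + (PrCI n (?c S3 (?c A1 S2)) + PrCI n (?c S2 (?c S3 A1))))"
    unfolding Tj_def comm_add_right PrCI_add msc_add
    by (simp add: fun_eq_iff algebra_simps)
  show ?thesis unfolding e comm_jacobi P2_pair[OF A1] P2_pair[OF A2] P2_pair[OF A3] by simp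
qed

lemma sl_add: "A \<in> sl N \<Longrightarrow> B \<in> sl N \<Longrightarrow> A + B \<in> sl N"
  by (simp add: sl_iff mtrace_def sum.distrib)
lemma sl_msc: "A \<in> sl N \<Longrightarrow> msc c A \<in> sl N"
  by (simp add: sl_iff mtrace_def sum_distrib_left[symmetric])
lemma sl_zero: "0 \<in> sl N"
  by (simp add: sl_iff mtrace_def)
lemma subspace_sl: "subspace_c (sl N)"
  by (simp add: subspace_c_def sl_add sl_msc sl_zero)

lemma comm_in_sl: "comm N A B \<in> sl N"
  using trace_comm[of N A B] by (simp add: sl_iff) (simp add: comm_def mmul_def)

lemma Imat_in_sl: "Imat n \<in> sl (Suc n)"
  by (simp add: sl_iff mtrace_Suc) (simp add: Imat_alt mtrace_def)

lemma PrCI_in_sl: "PrCI n M \<in> sl (Suc n)"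
  unfolding PrCI_form by (rule sl_msc[OF Imat_in_sl])

lemma mu_in_sl: "mu_inf n X Y \<in> sl (Suc n)"
  unfolding mu_inf_def by (intro sl_add sl_msc comm_in_sl PrCI_in_sl)

lemma mu_bilin_left: "mu_inf n (x + msc c y) z = mu_inf n x z + msc c (mu_inf n y z)"
  unfolding mu_inf_def compSl_add compSl_msc compS_add compS_msc comm_add_left comm_msc_left
    PrCI_add PrCI_msc msc_add msc_msc
  by (simp add: fun_eq_iff algebra_simps)

lemma mu_bilin_right: "mu_inf n z (x + msc c y) = mu_inf n z x + msc c (mu_inf n z y)"
  unfolding mu_inf_def compSl_add compSl_msc compS_add compS_msc comm_add_right comm_msc_right
    PrCI_add PrCI_msc msc_add msc_msc
  by (simp add: fun_eq_iff algebra_simps)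

lemma mu_self: "mu_inf n x x = 0"
proof -
  have "comm (Suc n) (compSl n x) (compS n x) + comm (Suc n) (compS n x) (compSl n x) = 0"
    by (subst comm_anti) simp
  thus ?thesis unfolding mu_inf_def by (simp add: add.assoc)
qed

lemma compSl_mu: "1 \<le> n \<Longrightarrow> X \<in> sl (Suc n) \<Longrightarrow> Y \<in> sl (Suc n) \<Longrightarrow>
  compSl n (mu_inf n X Y) = comm (Suc n) (compSl n X) (compSl n Y)"
proof -
  assume n: "1 \<le> n" and X: "X \<in> sl (Suc n)" and Y: "Y \<in> sl (Suc n)"
  have a: "compSl n X \<in> sl n" "compSl n Y \<in> sl n" using compSl_in_sl n X Y by auto
  show ?thesis unfolding mu_inf_def compSl_add compSl_msc compSl_PrCI[OF n]
    compSl_sl[OF comm_sl_sl[OF a]] compSl_s[OF comm_sl_s[OF a(1) compS_in_s]]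
    compSl_s[OF comm_s_sl[OF a(2) compS_in_s]] by simp
qed

lemma compS_mu: "1 \<le> n \<Longrightarrow> X \<in> sl (Suc n) \<Longrightarrow> Y \<in> sl (Suc n) \<Longrightarrow>
  compS n (mu_inf n X Y) = comm (Suc n) (compSl n X) (compS n Y) + comm (Suc n) (compS n X) (compSl n Y)"
proof -
  assume n: "1 \<le> n" and X: "X \<in> sl (Suc n)" and Y: "Y \<in> sl (Suc n)"
  have a: "compSl n X \<in> sl n" "compSl n Y \<in> sl n" using compSl_in_sl n X Y by auto
  show ?thesis unfolding mu_inf_def compS_add compS_msc compS_PrCI
    compS_sl[OF comm_sl_sl[OF a]] compS_s[OF comm_sl_s[OF a(1) compS_in_s]]
    compS_s[OF comm_s_sl[OF a(2) compS_in_s]] by simp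
qed

lemma mu_mu: "1 \<le> n \<Longrightarrow> Y \<in> sl (Suc n) \<Longrightarrow> Z \<in> sl (Suc n) \<Longrightarrow>
  mu_inf n X (mu_inf n Y Z) = Tj n (complex_of_real (sqrt ((real n ^ 2 - 2) / (real n * (real n + 1)))))
     (compSl n X) (compS n X) (compSl n Y) (compS n Y) (compSl n Z) (compS n Z)"
proof -
  assume n: "1 \<le> n" and Y: "Y \<in> sl (Suc n)" and Z: "Z \<in> sl (Suc n)"
  show ?thesis
    unfolding mu_inf_def[of n X "mu_inf n Y Z"] compSl_mu[OF n Y Z] compS_mu[OF n Y Z] Tj_def
    by simp
qed

lemma mu_jacobi: "1 \<le> n \<Longrightarrow> X \<in> sl (Suc n) \<Longrightarrow> Y \<in> sl (Suc n) \<Longrightarrow> Z \<in> sl (Suc n) \<Longrightarrow>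
  mu_inf n X (mu_inf n Y Z) + mu_inf n Y (mu_inf n Z X) + mu_inf n Z (mu_inf n X Y) = 0"
  by (simp add: mu_mu jac_core compSl_in_sl)

lemma lie_sl: "1 \<le> n \<Longrightarrow> lie_algebra (sl (Suc n)) (mu_inf n)"
  unfolding lie_algebra_def
  by (simp add: subspace_sl mu_in_sl mu_bilin_left mu_bilin_right mu_self mu_jacobi)

lemma sl_sub: "A \<in> sl n \<Longrightarrow> A \<in> sl (Suc n)"
  by (simp add: sl_iff mtrace_Suc)

lemma mu_sl_sl: "x \<in> sl n \<Longrightarrow> y \<in> sl n \<Longrightarrow> mu_inf n x y = comm (Suc n) x y"
  unfolding mu_inf_def by (simp add: compSl_sl compS_sl)

lemma subalg: "subalgebra (sl (Suc n)) (mu_inf n) (sl n)"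
  unfolding subalgebra_def by (auto simp: sl_sub subspace_sl mu_sl_sl comm_sl_sl)

lemma s_in_sl: "S \<in> s_space n \<Longrightarrow> S \<in> sl (Suc n)"
proof -
  assume S: "S \<in> s_space n"
  have "\<forall>i j. (Suc n \<le> i \<or> Suc n \<le> j) \<longrightarrow> S i j = 0" using s_spaceD[OF S] by auto
  moreover have "mtrace (Suc n) S = 0" unfolding mtrace_def by (rule sum.neutral) (auto intro: s_spaceD[OF S])
  ultimately show ?thesis by (simp add: sl_iff)
qed

lemma s_spaceI: "(\<And>i j. \<not> ((i < n \<and> j = n) \<or> (i = n \<and> j < n)) \<Longrightarrow> S i j = 0) \<Longrightarrow> S \<in> s_space n"
  unfolding s_space_def by blast
lemma s_add: "S \<in> s_space n \<Longrightarrow> S' \<in> s_space n \<Longrightarrow> S + S' \<in> s_space n"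
  by (rule s_spaceI) (simp add: s_spaceD)
lemma s_msc: "S \<in> s_space n \<Longrightarrow> msc c S \<in> s_space n"
  by (rule s_spaceI) (simp add: s_spaceD)
lemma s_zero: "0 \<in> s_space n"
  by (rule s_spaceI) simp

lemma heis_sub: "heis_part n \<subseteq> sl (Suc n)"
proof
  fix x assume "x \<in> heis_part n"
  then obtain c S where S: "S \<in> s_space n" and x: "x = msc c (Imat n) + S" unfolding heis_part_def by auto
  show "x \<in> sl (Suc n)" unfolding x by (rule sl_add[OF sl_msc[OF Imat_in_sl] s_in_sl[OF S]])
qed

lemma heis_subspace: "subspace_c (heis_part n)"
proof -
  have 1: "0 \<in> heis_part n"
    unfolding heis_part_def by (rule CollectI, rule exI[of _ 0], rule exI[of _ 0]) (simp add: s_zero)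
  have 2: "x + y \<in> heis_part n" if x: "x \<in> heis_part n" and y: "y \<in> heis_part n" for x y
  proof -
    obtain c S where S: "S \<in> s_space n" and xd: "x = msc c (Imat n) + S" using x unfolding heis_part_def by auto
    obtain c' S' where S': "S' \<in> s_space n" and yd: "y = msc c' (Imat n) + S'" using y unfolding heis_part_def by auto
    have e: "x + y = msc (c + c') (Imat n) + (S + S')"
      unfolding xd yd by (simp add: fun_eq_iff algebra_simps)
    have "S + S' \<in> s_space n" using s_add[OF S S'] .
    then show ?thesis unfolding heis_part_def e by blast
  qed
  have 3: "msc d x \<in> heis_part n" if x: "x \<in> heis_part n" for x d
  proof -
    obtain c S where S: "S \<in> s_space n" and xd: "x = msc c (Imat n) + S" using x unfolding heis_part_def by auto
    have e: "msc d x = msc (d * c) (Imat n) + msc d S"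
      unfolding xd by (simp add: fun_eq_iff algebra_simps)
    have "msc d S \<in> s_space n" using s_msc[OF S] .
    then show ?thesis unfolding heis_part_def e by blast
  qed
  show ?thesis unfolding subspace_c_def using 1 2 3 by blast
qed

lemma ideal: "1 \<le> n \<Longrightarrow> lie_ideal (sl (Suc n)) (mu_inf n) (heis_part n)"
  unfolding lie_ideal_def
proof (intro conjI ballI heis_sub heis_subspace)
  fix x y assume n: "1 \<le> n" and x: "x \<in> sl (Suc n)" and y: "y \<in> heis_part n"
  then obtain c S where S: "S \<in> s_space n" and yd: "y = msc c (Imat n) + S"
    unfolding heis_part_def by auto
  have a: "compSl n y = 0" unfolding yd compSl_add compSl_I[OF n] compSl_s[OF S] by simp
  have b: "compS n y = S" unfolding yd compS_add compS_I compS_s[OF S] by simp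
  have e: "mu_inf n x y = msc (complex_of_real (sqrt ((real n ^ 2 - 2) / (real n * (real n + 1))))
       * (hs (Suc n) (comm (Suc n) (compS n x) S) (Imat n) / hs (Suc n) (Imat n) (Imat n))) (Imat n)
     + comm (Suc n) (compSl n x) S"
    unfolding mu_inf_def a b PrCI_form msc_msc by (simp add: add.commute)
  show "mu_inf n x y \<in> heis_part n"
    unfolding e heis_part_def using comm_sl_s[OF compSl_in_sl[OF n x] S] by blast
qed

lemma inter0: "1 \<le> n \<Longrightarrow> sl n \<inter> heis_part n = {0}"
proof
  assume n: "1 \<le> n"
  show "{0} \<subseteq> sl n \<inter> heis_part n"
    using sl_zero heis_subspace unfolding subspace_c_def by auto
  show "sl n \<inter> heis_part n \<subseteq> {0}"
  proof
    fix X assume "X \<in> sl n \<inter> heis_part n"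
    then obtain c S where X: "X \<in> sl n" and S: "S \<in> s_space n" and Xd: "X = msc c (Imat n) + S"
      unfolding heis_part_def by auto
    have "X n n = 0" using slD[OF X] by simp
    moreover have "X n n = - c * of_nat n * alpha n" using s_spaceD[OF S, of n n]
      by (simp add: Xd Imat_alt)
    ultimately have c: "c = 0" using alpha_nz[OF n] n by simp
    have "X i j = 0" for i j
    proof (cases "(i < n \<and> j = n) \<or> (i = n \<and> j < n)")
      case True then show ?thesis using slD[OF X] by auto
    next
      case False then show ?thesis using s_spaceD[OF S False] by (simp add: Xd c)
    qed
    then show "X \<in> {0}" by (simp add: fun_eq_iff)
  qed
qed

lemma decomp: "1 \<le> n \<Longrightarrow> x \<in> sl (Suc n) \<Longrightarrow> \<exists>s\<in>sl n. \<exists>h\<in>heis_part n. x = s + h"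
proof -
  assume n: "1 \<le> n" and x: "x \<in> sl (Suc n)"
  have "x = compSl n x + (PrCI n x + compS n x)" by (simp add: compSl_def fun_eq_iff)
  moreover have "PrCI n x + compS n x \<in> heis_part n"
    unfolding heis_part_def PrCI_form using compS_in_s by blast
  ultimately show ?thesis using compSl_in_sl[OF n x] by blast
qed

lemma semi: "1 \<le> n \<Longrightarrow> semidirect (sl (Suc n)) (mu_inf n) (sl n) (heis_part n)"
  unfolding semidirect_def using subalg ideal inter0 decomp by blast

definition Xb :: "nat \<Rightarrow> nat \<Rightarrow> cmat" where "Xb n i = (\<lambda>p q. if p = i \<and> q = n then 1 else 0)"
definition Yb :: "nat \<Rightarrow> nat \<Rightarrow> cmat" where "Yb n i = (\<lambda>p q. if p = n \<and> q = i then 1 else 0)"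
definition kk :: "nat \<Rightarrow> complex" where
  "kk n = complex_of_real (sqrt ((real n ^ 2 - 2) / (real n * (real n + 1))))"
definition zz :: "nat \<Rightarrow> complex" where "zz n = kk n * alpha n * (of_nat n + 1)"
definition Zb :: "nat \<Rightarrow> cmat" where "Zb n = msc (zz n) (Imat n)"

lemma Xb_s: "i < n \<Longrightarrow> Xb n i \<in> s_space n"
  by (rule s_spaceI) (auto simp: Xb_def)
lemma Yb_s: "i < n \<Longrightarrow> Yb n i \<in> s_space n"
  by (rule s_spaceI) (auto simp: Yb_def)

lemma kk_nz: "2 \<le> n \<Longrightarrow> kk n \<noteq> 0"
proof -
  assume n: "2 \<le> n"
  have "real n ^ 2 \<ge> 2 ^ 2" using n by (intro power_mono) auto
  hence g: "real n ^ 2 - 2 > 0" by simp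
  moreover have "real n * (real n + 1) > 0" using n by simp
  ultimately have "(real n ^ 2 - 2) / (real n * (real n + 1)) > 0" by simp
  thus ?thesis unfolding kk_def using g n by simp
qed

lemma zz_nz: "2 \<le> n \<Longrightarrow> zz n \<noteq> 0"
proof -
  assume n: "2 \<le> n"
  have "(of_nat n + 1 :: complex) \<noteq> 0"
    by (metis of_nat_Suc of_nat_eq_0_iff add.commute nat.simps(3))
  thus ?thesis unfolding zz_def using kk_nz[OF n] alpha_nz[of n] n by simp
qed

lemma sumX: "(\<Sum>l<n. msc (a l) (Xb n l)) p q = (if p < n \<and> q = n then a p else 0)"
proof -
  have "(\<Sum>l<n. msc (a l) (Xb n l)) p q = (\<Sum>l<n. if l = p then (if q = n then a l else 0) else 0)"
    unfolding sum_fun_app by (rule sum.cong) (auto simp: Xb_def)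
  also have "\<dots> = (if p < n \<and> q = n then a p else 0)" by (simp add: sum.delta)
  finally show ?thesis .
qed

lemma sumY: "(\<Sum>l<n. msc (a l) (Yb n l)) p q = (if p = n \<and> q < n then a q else 0)"
proof -
  have "(\<Sum>l<n. msc (a l) (Yb n l)) p q = (\<Sum>l<n. if l = q then (if p = n then a l else 0) else 0)"
    unfolding sum_fun_app by (rule sum.cong) (auto simp: Yb_def)
  also have "\<dots> = (if p = n \<and> q < n then a q else 0)" by (simp add: sum.delta)
  finally show ?thesis .
qed

lemma commXY_entry: "i < n \<Longrightarrow> j < n \<Longrightarrow> p < Suc n \<Longrightarrow> q < Suc n \<Longrightarrow>
  comm (Suc n) (Xb n i) (Yb n j) p q = (if p = i \<and> q = j then 1 else 0) - (if p = n \<and> q = n \<and> i = j then 1 else 0)"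
proof -
  assume i: "i < n" and j: "j < n" and p: "p < Suc n" and q: "q < Suc n"
  have 1: "(\<Sum>k<Suc n. Xb n i p k * Yb n j k q) = (\<Sum>k<Suc n. if k = n then (if p = i \<and> q = j then 1 else 0) else 0)"
    by (rule sum.cong) (auto simp: Xb_def Yb_def)
  have 2: "(\<Sum>k<Suc n. Yb n j p k * Xb n i k q) = (\<Sum>k<Suc n. if k = j then (if p = n \<and> q = n \<and> i = j then 1 else 0) else 0)"
    by (rule sum.cong) (auto simp: Xb_def Yb_def)
  show ?thesis unfolding comm_def mmul_def 1 2 using p q j by (simp del: sum.lessThan_Suc add: sum.delta)
qed

lemma hs_commXY: "i < n \<Longrightarrow> j < n \<Longrightarrow>
  hs (Suc n) (comm (Suc n) (Xb n i) (Yb n j)) (Imat n) = (if i = j then alpha n * (of_nat n + 1) else 0)"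
proof -
  assume i: "i < n" and j: "j < n"
  have "(\<Sum>l<n. comm (Suc n) (Xb n i) (Yb n j) l l) = (\<Sum>l<n. if l = i then (if i = j then 1 else 0) else 0)"
    by (rule sum.cong) (auto simp: commXY_entry[OF i j])
  also have "\<dots> = (if i = j then 1 else 0)" using i by (simp add: sum.delta)
  finally have s: "(\<Sum>l<n. comm (Suc n) (Xb n i) (Yb n j) l l) = (if i = j then 1 else 0)" .
  have d: "comm (Suc n) (Xb n i) (Yb n j) n n = - (if i = j then 1 else 0)"
    using i j by (simp add: commXY_entry[OF i j])
  show ?thesis unfolding hs_I s d by (simp add: algebra_simps)
qed

lemma commXX: "i < n \<Longrightarrow> j < n \<Longrightarrow> comm (Suc n) (Xb n i) (Xb n j) = 0"
  unfolding comm_def mmul_def Xb_def fun_eq_iff by (auto intro!: sum.neutral)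

lemma commYY: "i < n \<Longrightarrow> j < n \<Longrightarrow> comm (Suc n) (Yb n i) (Yb n j) = 0"
  unfolding comm_def mmul_def Yb_def fun_eq_iff by (auto intro!: sum.neutral)

lemma mu_ss: "S \<in> s_space n \<Longrightarrow> S' \<in> s_space n \<Longrightarrow> mu_inf n S S' = msc (kk n) (PrCI n (comm (Suc n) S S'))"
  unfolding mu_inf_def kk_def by (simp add: compSl_s compS_s)

lemma mu_XY: "1 \<le> n \<Longrightarrow> i < n \<Longrightarrow> j < n \<Longrightarrow> mu_inf n (Xb n i) (Yb n j) = (if i = j then Zb n else 0)"
  by (simp add: mu_ss Xb_s Yb_s PrCI_eq hs_commXY msc_msc Zb_def zz_def mult.assoc)

lemma mu_XX: "i < n \<Longrightarrow> j < n \<Longrightarrow> mu_inf n (Xb n i) (Xb n j) = 0"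
  by (simp add: mu_ss Xb_s commXX)

lemma mu_YY: "i < n \<Longrightarrow> j < n \<Longrightarrow> mu_inf n (Yb n i) (Yb n j) = 0"
  by (simp add: mu_ss Yb_s commYY)

lemma mu_SZ: "1 \<le> n \<Longrightarrow> mu_inf n S (Zb n) = 0"
  unfolding mu_inf_def Zb_def by (simp add: compSl_I compS_I)

lemma heis: "2 \<le> n \<Longrightarrow> heisenberg n (heis_part n) (mu_inf n)"
proof -
  assume n2: "2 \<le> n"
  hence n: "1 \<le> n" by simp
  have zn: "zz n \<noteq> 0" using zz_nz[OF n2] .
  have an: "alpha n \<noteq> 0" using alpha_nz[OF n] .
  have memX: "Xb n i \<in> heis_part n \<and> Yb n i \<in> heis_part n" if "i < n" for i
  proof -
    have "Xb n i = msc 0 (Imat n) + Xb n i" "Yb n i = msc 0 (Imat n) + Yb n i" by simp_all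
    thus ?thesis unfolding heis_part_def using Xb_s[OF that] Yb_s[OF that] by blast
  qed
  have memZ: "Zb n \<in> heis_part n"
  proof -
    have "Zb n = msc (zz n) (Imat n) + 0" by (simp add: Zb_def)
    thus ?thesis unfolding heis_part_def using s_zero by blast
  qed
  have indep: "(\<forall>i<n. a i = 0 \<and> a' i = 0) \<and> c = 0"
    if E: "(\<Sum>i<n. msc (a i) (Xb n i)) + (\<Sum>i<n. msc (a' i) (Yb n i)) + msc c (Zb n) = 0" for a a' c
  proof -
    have ev: "(if p < n \<and> q = n then a p else 0) + (if p = n \<and> q < n then a' q else 0) + c * (zz n * Imat n p q) = 0" for p q
      using fun_cong[OF fun_cong[OF E, of p], of q] by (simp add: sumX sumY Zb_def)
    have "a i = 0 \<and> a' i = 0" if "i < n" for i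
      using ev[of i n] ev[of n i] that by (simp add: Imat_alt)
    moreover have "c = 0"
      using ev[of n n] zn an n by (simp add: Imat_alt)
    ultimately show ?thesis by blast
  qed
  have span: "\<exists>a a' c. h = (\<Sum>i<n. msc (a i) (Xb n i)) + (\<Sum>i<n. msc (a' i) (Yb n i)) + msc c (Zb n)"
    if h: "h \<in> heis_part n" for h
  proof -
    obtain c S where S: "S \<in> s_space n" and hd: "h = msc c (Imat n) + S" using h unfolding heis_part_def by auto
    have "h = (\<Sum>i<n. msc (S i n) (Xb n i)) + (\<Sum>i<n. msc (S n i) (Yb n i)) + msc (c / zz n) (Zb n)"
    proof (rule ext, rule ext)
      fix p q
      have Z: "msc (c / zz n) (Zb n) p q = c * Imat n p q" using zn by (simp add: Zb_def)
      show "h p q = ((\<Sum>i<n. msc (S i n) (Xb n i)) + (\<Sum>i<n. msc (S n i) (Yb n i)) + msc (c / zz n) (Zb n)) p q"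
      proof (cases "(p < n \<and> q = n) \<or> (p = n \<and> q < n)")
        case True
        then show ?thesis unfolding plus_fun_apply sumX sumY Z hd by (auto simp: Imat_alt)
      next
        case False
        then show ?thesis unfolding plus_fun_apply sumX sumY Z hd using s_spaceD[OF S False] by auto
      qed
    qed
    thus ?thesis
      by (intro exI[of _ "\<lambda>i. S i n"] exI[of _ "\<lambda>i. S n i"] exI[of _ "c / zz n"]) simp
  qed
  show ?thesis
    unfolding heisenberg_def
    apply (rule exI[of _ "Xb n"], rule exI[of _ "Yb n"], rule exI[of _ "Zb n"])
    using memX memZ indep span mu_XY[OF n] mu_XX mu_YY mu_SZ[OF n] by auto
qed

theorem lemma3p11:
  fixes n :: nat
  assumes "2 \<le> n"
  shows "lie_algebra (sl (Suc n)) (mu_inf n)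
       \<and> semidirect (sl (Suc n)) (mu_inf n) (sl n) (heis_part n)
       \<and> heisenberg n (heis_part n) (mu_inf n)"
  using assms lie_sl semi heis by simp

end
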